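(* Let $n\ge 0$ and $0\le k\le n$ be integers of the same parity (both even or both odd). Then $$\max_{x\in[-1,1]}|T_{n;\ge k}(x)|=|T_{n;\ge k}(0)|=|t_{n,k}|,$$ and consequently this maximum is at most $(n+k)^k/k!$.
   Context: For an integer $n\ge 0$, $T_n$ denotes the Chebyshev polynomial of the first kind, i.e. the polynomial with $T_n(\cos\theta)=\cos(n\theta)$ for all real $\theta$; write $T_n(x)=\sum_{j=0}^n t_{n,j}x^j$. For $0\le k\le n$ define the constituent polynomial $T_{n;\ge k}(x):=\sum_{j=k}^{n}t_{n,j}x^{j-k}$, so that $T_n(x)=\sum_{j=0}^{k-1}t_{n,j}x^j+x^kT_{n;\ge k}(x)$. *)

theory Defs
  imports "HOL-Computational_Algebra.Polynomial" Complex_Main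
begin

definition cheb_T :: "nat \<Rightarrow> real poly" where
  "cheb_T n = (THE p. \<forall>\<theta>::real. poly p (cos \<theta>) = cos (real n * \<theta>))"

definition cheb_T_ge :: "nat \<Rightarrow> nat \<Rightarrow> real poly" where
  "cheb_T_ge n k = (\<Sum>j=k..n. monom (coeff (cheb_T n) j) (j - k))"

end

theory Submission
  imports Defs
begin

fun chebT :: "nat \<Rightarrow> real poly" where
  "chebT 0 = 1"
| "chebT (Suc 0) = [:0, 1:]"
| "chebT (Suc (Suc n)) = [:0, 2:] * chebT (Suc n) - chebT n"

lemma chebT_cos: "poly (chebT n) (cos t) = cos (real n * t)"
proof (induction n rule: chebT.induct)
  case 1 then show ?case by simp
next
  case 2 then show ?case by simp
next
  case (3 n)
  have "cos (real (Suc (Suc n)) * t) = 2 * cos t * cos (real (Suc n) * t) - cos (real n * t)"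
  proof -
    have a: "real (Suc (Suc n)) * t = real (Suc n) * t + t" by (simp add: algebra_simps)
    have b: "real n * t = real (Suc n) * t - t" by (simp add: algebra_simps)
    show ?thesis unfolding a b cos_add cos_diff by (simp add: algebra_simps)
  qed
  then show ?case using 3 by (simp add: algebra_simps)
qed

lemma cheb_T_eq: "cheb_T n = chebT n"
proof -
  have u: "p = chebT n" if h: "\<forall>t::real. poly p (cos t) = cos (real n * t)" for p
  proof -
    have "{-1..1::real} \<subseteq> {x. poly (p - chebT n) x = 0}"
    proof
      fix x :: real assume "x \<in> {-1..1}"
      then have "cos (arccos x) = x" by (simp add: cos_arccos)
      then show "x \<in> {x. poly (p - chebT n) x = 0}"
        using h chebT_cos by (metis (mono_tags) diff_self mem_Collect_eq poly_diff)
    qed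
    moreover have "infinite {-1..1::real}" by simp
    ultimately have "\<not> finite {x. poly (p - chebT n) x = 0}" using finite_subset by blast
    then have "p - chebT n = 0" using poly_roots_finite by blast
    then show ?thesis by simp
  qed
  show ?thesis unfolding cheb_T_def
    by (rule the_equality) (use chebT_cos u in auto)
qed

lemma chebT_bound: "x \<in> {-1..1} \<Longrightarrow> \<bar>poly (chebT n) x\<bar> \<le> 1"
proof -
  assume "x \<in> {-1..1}"
  then have "cos (arccos x) = x" by (simp add: cos_arccos)
  then have "poly (chebT n) x = cos (real n * arccos x)" by (metis chebT_cos)
  then show ?thesis by simp
qed

lemma chebT_zero_even: "even n \<Longrightarrow> poly (chebT n) 0 = (-1) ^ (n div 2)"
proof -
  assume "even n"
  then obtain m where m: "n = 2 * m" by blast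
  have "poly (chebT n) (cos (pi/2)) = cos (real n * (pi/2))" by (rule chebT_cos)
  moreover have "real n * (pi/2) = real m * pi" using m by simp
  ultimately show ?thesis using m by simp
qed

lemma degree_chebT: "degree (chebT n) \<le> n"
proof (induction n rule: chebT.induct)
  case 1 then show ?case by simp
next
  case 2 then show ?case by simp
next
  case (3 n)
  have "degree ([:0, 2:] * chebT (Suc n)) \<le> Suc (Suc n)"
    using 3 degree_mult_le[of "[:0,2::real:]" "chebT (Suc n)"] by simp
  moreover have "degree (chebT n) \<le> Suc (Suc n)" using 3 by simp
  ultimately show ?case by (metis chebT.simps(3) degree_diff_le)
qed

lemma coeff_chebT_big: "n < j \<Longrightarrow> coeff (chebT n) j = 0"
  using degree_chebT by (meson coeff_eq_0 le_less_trans)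

lemma coeff_chebT_rec:
  "coeff (chebT (Suc (Suc n))) (Suc j) = 2 * coeff (chebT (Suc n)) j - coeff (chebT n) (Suc j)"
proof -
  have "[:0, 2:] * chebT (Suc n) = pCons 0 (smult 2 (chebT (Suc n)))" by simp
  then show ?thesis by simp
qed

lemma coeff_ge: "coeff (cheb_T_ge n k) i = coeff (chebT n) (i + k)"
proof -
  have "coeff (cheb_T_ge n k) i = (\<Sum>j=k..n. if j - k = i then coeff (chebT n) j else 0)"
    unfolding cheb_T_ge_def cheb_T_eq coeff_sum coeff_monom by (rule sum.cong) auto
  also have "\<dots> = (\<Sum>j\<in>{k..n}. if j = i + k then coeff (chebT n) j else 0)"
    by (rule sum.cong) auto
  also have "\<dots> = coeff (chebT n) (i + k)"
    using coeff_chebT_big[of n "i+k"] by (subst sum.delta) auto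
  finally show ?thesis .
qed

lemma ge_0: "cheb_T_ge n 0 = chebT n"
  by (rule poly_eqI) (simp add: coeff_ge)

lemma ge_big: "n < k \<Longrightarrow> cheb_T_ge n k = 0"
  by (rule poly_eqI) (simp add: coeff_ge coeff_chebT_big)

lemma ge_at0: "poly (cheb_T_ge n k) 0 = coeff (chebT n) k"
  by (simp add: poly_0_coeff_0 coeff_ge)

lemma ge_rec:
  "cheb_T_ge (Suc (Suc n)) (Suc k) = smult 2 (cheb_T_ge (Suc n) k) - cheb_T_ge n (Suc k)"
  by (rule poly_eqI) (simp add: coeff_ge coeff_chebT_rec)

lemma cone:
  "even (n - k) \<Longrightarrow> x \<in> {-1..1} \<Longrightarrow>
     \<bar>poly (cheb_T_ge n k) x\<bar> \<le> (-1) ^ ((n - k) div 2) * poly (cheb_T_ge n k) 0"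
proof (induction n arbitrary: k x rule: less_induct)
  case (less n)
  show ?case
  proof (cases "n < k")
    case True then show ?thesis by (simp add: ge_big)
  next
    case nk: False
    show ?thesis
    proof (cases k)
      case 0
      then have "even n" using less by simp
      then show ?thesis using 0 chebT_zero_even[of n] chebT_bound[OF less(3)]
        by (simp add: ge_0)
    next
      case (Suc k')
      show ?thesis
      proof (cases n)
        case 0 then show ?thesis using nk Suc by simp
      next
        case (Suc n1)
        show ?thesis
        proof (cases n1)
          case 0
          then have "k = 1" using nk \<open>n = Suc n1\<close> \<open>k = Suc k'\<close> by simp
          have "cheb_T_ge 1 1 = 1"
            by (rule poly_eqI) (auto simp: coeff_ge coeff_chebT_big coeff_pCons split: nat.split)
          then show ?thesis using \<open>k = 1\<close> \<open>n = Suc n1\<close> 0 by simp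
        next
          case (Suc n2)
          have n: "n = Suc (Suc n2)" using \<open>n = Suc n1\<close> Suc by simp
          define s where "s = ((-1::real) ^ ((n - k) div 2))"
          have rec: "cheb_T_ge n k = smult 2 (cheb_T_ge (Suc n2) k') - cheb_T_ge n2 k"
            using n \<open>k = Suc k'\<close> ge_rec by simp
          have e1: "even (Suc n2 - k')" using less(2) n \<open>k = Suc k'\<close> by simp
          have IH1: "\<bar>poly (cheb_T_ge (Suc n2) k') y\<bar> \<le> s * poly (cheb_T_ge (Suc n2) k') 0"
            if "y \<in> {-1..1}" for y
            using less(1)[of "Suc n2" k' y, OF _ e1 that] n \<open>k = Suc k'\<close> by (simp add: s_def)
          have IH2: "\<bar>poly (cheb_T_ge n2 k) y\<bar> \<le> - s * poly (cheb_T_ge n2 k) 0"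
            if "y \<in> {-1..1}" for y
          proof (cases "n2 < k")
            case True then show ?thesis by (simp add: ge_big)
          next
            case False
            then have "n - k = Suc (Suc (n2 - k))" using n by simp
            moreover have "even (n2 - k)" using less(2) n False by simp
            ultimately have "s = - ((-1) ^ ((n2 - k) div 2))" unfolding s_def
              by (auto elim!: evenE)
            then show ?thesis using less(1)[of n2 k y] n \<open>even (n2 - k)\<close> that by simp
          qed
          have "\<bar>poly (cheb_T_ge n k) x\<bar>
              \<le> 2 * \<bar>poly (cheb_T_ge (Suc n2) k') x\<bar> + \<bar>poly (cheb_T_ge n2 k) x\<bar>"
            unfolding rec by simp
          also have "\<dots> \<le> 2 * (s * poly (cheb_T_ge (Suc n2) k') 0) + (- s * poly (cheb_T_ge n2 k) 0)"
            using IH1[OF less(3)] IH2[OF less(3)] by linarith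
          also have "\<dots> = s * poly (cheb_T_ge n k) 0" unfolding rec by (simp add: algebra_simps)
          finally show ?thesis by (simp add: s_def)
        qed
      qed
    qed
  qed
qed

lemma frac_aux: "F > 0 \<Longrightarrow> (c::real) \<ge> 0 \<Longrightarrow>
  2 * (a / F) + u * a / ((1 + c) * F) = (u * a + 2 * (1 + c) * a) / ((1 + c) * F)"
proof -
  assume "F > 0" "c \<ge> 0"
  then have "(1 + c) * F > 0" by simp
  have "(2 * (1 + c) * a) / ((1 + c) * F) = ((1 + c) * (2 * a)) / ((1 + c) * F)"
    by (simp add: algebra_simps)
  also have "\<dots> = 2 * a / F" using \<open>c \<ge> 0\<close> by (subst mult_divide_mult_cancel_left) auto
  finally have "2 * (a / F) = (2 * (1 + c) * a) / ((1 + c) * F)" by simp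
  then show ?thesis by (simp add: add_divide_distrib)
qed

lemma pow_ineq: "(u::real) \<ge> 0 \<Longrightarrow> u ^ Suc m + 2 * real (Suc m) * u ^ m \<le> (u + 2) ^ Suc m"
proof (induction m)
  case 0 then show ?case by simp
next
  case (Suc m)
  have "(u + 2) ^ Suc (Suc m) = (u + 2) * (u + 2) ^ Suc m" by simp
  also have "\<dots> \<ge> (u + 2) * (u ^ Suc m + 2 * real (Suc m) * u ^ m)"
    using Suc by (intro mult_left_mono) auto
  finally have a: "(u + 2) * (u ^ Suc m + 2 * real (Suc m) * u ^ m) \<le> (u + 2) ^ Suc (Suc m)" .
  have "u ^ Suc (Suc m) + 2 * real (Suc (Suc m)) * u ^ Suc m
      \<le> (u + 2) * (u ^ Suc m + 2 * real (Suc m) * u ^ m)"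
    using Suc.prems by (simp add: algebra_simps)
  then show ?case using a by linarith
qed

lemma coeff_bound: "\<bar>coeff (chebT n) k\<bar> \<le> real (n + k) ^ k / fact k"
proof (induction n arbitrary: k rule: less_induct)
  case (less n)
  show ?case
  proof (cases "n < k")
    case True then show ?thesis by (simp add: coeff_chebT_big)
  next
    case nk: False
    show ?thesis
    proof (cases k)
      case 0
      have "\<bar>poly (chebT n) 0\<bar> \<le> 1" by (rule chebT_bound) simp
      then show ?thesis using 0 by (simp add: poly_0_coeff_0)
    next
      case (Suc k')
      show ?thesis
      proof (cases "n < 2")
        case True
        then have "n = 1" "k = 1" using nk Suc by auto
        then show ?thesis by simp
      next
        case False
        then obtain n2 where n: "n = Suc (Suc n2)" by (metis add_2_eq_Suc le_add_diff_inverse not_less)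
        define u where "u = real (Suc n2 + k')"
        have u0: "u \<ge> 0" by (simp add: u_def)
        have "\<bar>coeff (chebT n) k\<bar> \<le> 2 * \<bar>coeff (chebT (Suc n2)) k'\<bar> + \<bar>coeff (chebT n2) k\<bar>"
          using n Suc coeff_chebT_rec by simp
        also have "\<dots> \<le> 2 * (u ^ k' / fact k') + u ^ k / fact k"
          using less(1)[of "Suc n2" k'] less(1)[of n2 k] n Suc by (simp add: u_def)
        also have "\<dots> = (u ^ Suc k' + 2 * real (Suc k') * u ^ k') / fact (Suc k')"
        proof -
          have fp: "(fact k' :: real) > 0" by simp
          have "(fact (Suc k') :: real) = (1 + real k') * fact k'" by simp
          moreover have "u ^ k = u * u ^ k'" using Suc by simp
          ultimately show ?thesis using Suc frac_aux[OF fp, of "real k'" "u ^ k'" u]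
            by (simp add: algebra_simps)
        qed
        also have "\<dots> \<le> (u + 2) ^ Suc k' / fact (Suc k')"
          using pow_ineq[OF u0] by (intro divide_right_mono) auto
        also have "\<dots> = real (n + k) ^ k / fact k" using n Suc by (simp add: u_def)
        finally show ?thesis .
      qed
    qed
  qed
qed

theorem mainTheorem4:
  fixes n k :: nat
  assumes "k \<le> n" and "even n \<longleftrightarrow> even k"
  shows "(\<forall>x\<in>{-1..1::real}. \<bar>poly (cheb_T_ge n k) x\<bar> \<le> \<bar>poly (cheb_T_ge n k) 0\<bar>)
    \<and> (SUP x\<in>{-1..1::real}. \<bar>poly (cheb_T_ge n k) x\<bar>) = \<bar>poly (cheb_T_ge n k) 0\<bar>
    \<and> \<bar>poly (cheb_T_ge n k) 0\<bar> = \<bar>coeff (cheb_T n) k\<bar>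
    \<and> (SUP x\<in>{-1..1::real}. \<bar>poly (cheb_T_ge n k) x\<bar>) \<le> real (n + k) ^ k / fact k"
proof -
  let ?p = "cheb_T_ge n k"
  define s where "s = ((-1::real) ^ ((n - k) div 2))"
  have ev: "even (n - k)" using assms by auto
  have c: "\<bar>poly ?p x\<bar> \<le> s * poly ?p 0" if "x \<in> {-1..1}" for x
    using cone[OF ev that] by (simp add: s_def)
  have "\<bar>s\<bar> = 1" by (simp add: s_def)
  then have "s * poly ?p 0 \<le> \<bar>poly ?p 0\<bar>"
    by (metis abs_ge_self abs_mult mult_1 order.trans)
  with c[of 0] have eq: "s * poly ?p 0 = \<bar>poly ?p 0\<bar>" by simp
  have A: "\<forall>x\<in>{-1..1::real}. \<bar>poly ?p x\<bar> \<le> \<bar>poly ?p 0\<bar>" using c eq by simp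
  have B: "(SUP x\<in>{-1..1::real}. \<bar>poly ?p x\<bar>) = \<bar>poly ?p 0\<bar>"
    by (rule cSup_eq_maximum) (use A in auto)
  have C: "\<bar>poly ?p 0\<bar> = \<bar>coeff (cheb_T n) k\<bar>" by (simp add: ge_at0 cheb_T_eq)
  show ?thesis using A B C coeff_bound[of n k] by (simp add: cheb_T_eq)
qed

end
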